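(* Let $0<\alpha_i\le\beta_i$ for $i=1,\ldots,n$, $\alpha:=\sum_{i=1}^n\alpha_i$ and $\beta:=\sum_{i=1}^n\beta_i$. (i) If $\psi\in\Psi_n$, then $\alpha\,\psi\left(\frac{\alpha_1}{\alpha},\ldots,\frac{\alpha_n}{\alpha}\right)\le\beta\,\psi\left(\frac{\beta_1}{\beta},\ldots,\frac{\beta_n}{\beta}\right)$. (ii) If $\psi\in\Psi_n^{\rm sc}$ and $\alpha_i<\beta_i$ for some $i\in\{1,\ldots,n\}$, then this inequality is strict.
   Context: $n\ge2$ is an integer. $\Omega_n:=\{(t_1,\ldots,t_n)\in\mathbb{R}^n: t_1,\ldots,t_n\ge0,\ t_1+\cdots+t_n=1\}$ and $\Omega_n^\circ:=\{t\in\Omega_n: t_1,\ldots,t_n<1\}$; $\mathbf{e}_i$ denotes the $i$th standard unit vector of $\mathbb{R}^n$. $\Psi_n$ is the class of all convex continuous functions $\psi:\Omega_n\to\mathbb{R}$ such that (B1) $\psi(\mathbf{e}_1)=\cdots=\psi(\mathbf{e}_n)=1$, and (B2) for every $t\in\Omega_n^\circ$ and every $i$: $\psi(t)\ge(1-t_i)\,\psi\left(\frac{t_1}{1-t_i},\ldots,\frac{t_{i-1}}{1-t_i},0,\frac{t_{i+1}}{1-t_i},\ldots,\frac{t_n}{1-t_i}\right)$. $\Psi_n^{\rm sc}$ is the subclass of strictly convex members of $\Psi_n$. *)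

theory Defs
  imports "HOL-Analysis.Analysis"
begin

text \<open>The simplex Omega_n, with coordinates indexed by a finite type 'n (n = CARD('n)).\<close>
definition Omega :: "(real ^ 'n::finite) set" where
  "Omega = {t. (\<forall>i. t $ i \<ge> 0) \<and> (\<Sum>i\<in>UNIV. t $ i) = 1}"

definition Omega_circ :: "(real ^ 'n::finite) set" where
  "Omega_circ = {t \<in> Omega. \<forall>i. t $ i < 1}"

definition unitv :: "'n::finite \<Rightarrow> real ^ 'n" where
  "unitv i = (\<chi> j. if j = i then 1 else 0)"

definition strictly_convex_on :: "'a::real_vector set \<Rightarrow> ('a \<Rightarrow> real) \<Rightarrow> bool" where
  "strictly_convex_on S f \<longleftrightarrow> convex S \<and>
    (\<forall>x\<in>S. \<forall>y\<in>S. x \<noteq> y \<longrightarrow> (\<forall>u. 0 < u \<and> u < 1 \<longrightarrow>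
       f ((1 - u) *\<^sub>R x + u *\<^sub>R y) < (1 - u) * f x + u * f y))"

definition Psi :: "((real ^ 'n::finite) \<Rightarrow> real) set" where
  "Psi = {\<psi>. convex_on Omega \<psi> \<and> continuous_on Omega \<psi> \<and>
     (\<forall>i. \<psi> (unitv i) = 1) \<and>
     (\<forall>t\<in>Omega_circ. \<forall>i. \<psi> t \<ge> (1 - t $ i) *
        \<psi> (\<chi> j. if j = i then 0 else t $ j / (1 - t $ i)))}"

definition Psi_sc :: "((real ^ 'n::finite) \<Rightarrow> real) set" where
  "Psi_sc = {\<psi> \<in> Psi. strictly_convex_on Omega \<psi>}"

end

theory Submission
  imports Defs
begin

definition phi :: "((real ^ 'n::finite) \<Rightarrow> real) \<Rightarrow> real ^ 'n \<Rightarrow> real" where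
  "phi \<psi> x = (\<Sum>i\<in>UNIV. x $ i) * \<psi> ((1 / (\<Sum>i\<in>UNIV. x $ i)) *\<^sub>R x)"

lemma sum_scale: "(\<Sum>i\<in>UNIV. (c *\<^sub>R (x::real^'n::finite)) $ i) = c * (\<Sum>i\<in>UNIV. x $ i)"
  by (simp add: sum_distrib_left)

lemma in_Omega:
  assumes "\<And>i. (x::real^'n::finite) $ i \<ge> 0" "(\<Sum>i\<in>UNIV. x $ i) > 0"
  shows "(1 / (\<Sum>i\<in>UNIV. x $ i)) *\<^sub>R x \<in> Omega"
  using assms unfolding Omega_def by (auto simp: sum_scale sum_divide_distrib[symmetric])

lemma persp_comb:
  fixes y1 y2 :: "real ^ 'n::finite"
  assumes S1: "(\<Sum>i\<in>UNIV. y1 $ i) > 0" and S2: "(\<Sum>i\<in>UNIV. y2 $ i) > 0"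
    and l: "0 \<le> l" "l \<le> 1"
  defines "S \<equiv> (1 - l) * (\<Sum>i\<in>UNIV. y1 $ i) + l * (\<Sum>i\<in>UNIV. y2 $ i)"
  defines "\<mu> \<equiv> (1 - l) * (\<Sum>i\<in>UNIV. y1 $ i) / S"
  shows "S > 0" "(\<Sum>i\<in>UNIV. ((1 - l) *\<^sub>R y1 + l *\<^sub>R y2) $ i) = S"
    "0 \<le> \<mu>" "\<mu> \<le> 1"
    "(1 / S) *\<^sub>R ((1 - l) *\<^sub>R y1 + l *\<^sub>R y2) =
       \<mu> *\<^sub>R ((1 / (\<Sum>i\<in>UNIV. y1 $ i)) *\<^sub>R y1) + (1 - \<mu>) *\<^sub>R ((1 / (\<Sum>i\<in>UNIV. y2 $ i)) *\<^sub>R y2)"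
    "S * \<mu> = (1 - l) * (\<Sum>i\<in>UNIV. y1 $ i)" "S * (1 - \<mu>) = l * (\<Sum>i\<in>UNIV. y2 $ i)"
    "0 < l \<Longrightarrow> l < 1 \<Longrightarrow> 0 < \<mu> \<and> \<mu> < 1"
proof -
  define A where "A = (\<Sum>i\<in>UNIV. y1 $ i)"
  define B where "B = (\<Sum>i\<in>UNIV. y2 $ i)"
  have A: "A > 0" and B: "B > 0" using S1 S2 by (auto simp: A_def B_def)
  have Sd: "S = (1-l)*A + l*B" by (simp add: S_def A_def B_def)
  show Sp: "S > 0" unfolding Sd using A B l
    by (cases "l = 0") (auto intro: add_nonneg_pos add_pos_nonneg)
  show "(\<Sum>i\<in>UNIV. ((1 - l) *\<^sub>R y1 + l *\<^sub>R y2) $ i) = S"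
    by (simp add: S_def sum.distrib sum_distrib_left)
  have md: "\<mu> = (1-l)*A/S" by (simp add: \<mu>_def A_def)
  show "0 \<le> \<mu>" using Sp l A by (simp add: md)
  show "\<mu> \<le> 1" using Sp l A B by (simp add: md Sd field_simps)
  show "S * \<mu> = (1 - l) * (\<Sum>i\<in>UNIV. y1 $ i)" using Sp by (simp add: md A_def)
  show "S * (1 - \<mu>) = l * (\<Sum>i\<in>UNIV. y2 $ i)" using Sp by (simp add: md Sd B_def[symmetric] field_simps)
  show "0 < l \<Longrightarrow> l < 1 \<Longrightarrow> 0 < \<mu> \<and> \<mu> < 1" using Sp A B by (simp add: md Sd field_simps)
  show "(1 / S) *\<^sub>R ((1 - l) *\<^sub>R y1 + l *\<^sub>R y2) =
       \<mu> *\<^sub>R ((1 / (\<Sum>i\<in>UNIV. y1 $ i)) *\<^sub>R y1) + (1 - \<mu>) *\<^sub>R ((1 / (\<Sum>i\<in>UNIV. y2 $ i)) *\<^sub>R y2)"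
    unfolding A_def[symmetric] B_def[symmetric]
  proof -
    have e1: "\<mu> * (1 / A) = (1 - l) / S" using A Sp by (simp add: md)
    have e2: "(1 - \<mu>) * (1 / B) = l / S" using A B Sp by (simp add: md Sd field_simps)
    show "(1 / S) *\<^sub>R ((1 - l) *\<^sub>R y1 + l *\<^sub>R y2) =
       \<mu> *\<^sub>R ((1 / A) *\<^sub>R y1) + (1 - \<mu>) *\<^sub>R ((1 / B) *\<^sub>R y2)"
      unfolding scaleR_scaleR e1 e2 using Sp by (simp add: vec_eq_iff field_simps)
  qed
qed

lemma persp_convex:
  fixes y1 y2 :: "real ^ 'n::finite"
  assumes cv: "convex_on Omega \<psi>"
    and n1: "\<And>i. y1 $ i \<ge> 0" and n2: "\<And>i. y2 $ i \<ge> 0"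
    and S1: "(\<Sum>i\<in>UNIV. y1 $ i) > 0" and S2: "(\<Sum>i\<in>UNIV. y2 $ i) > 0"
    and l: "0 \<le> l" "l \<le> 1"
  shows "phi \<psi> ((1 - l) *\<^sub>R y1 + l *\<^sub>R y2) \<le> (1 - l) * phi \<psi> y1 + l * phi \<psi> y2"
proof -
  note pc = persp_comb[OF S1 S2 l]
  define S where "S \<equiv> (1 - l) * (\<Sum>i\<in>UNIV. y1 $ i) + l * (\<Sum>i\<in>UNIV. y2 $ i)"
  define \<mu> where "\<mu> \<equiv> (1 - l) * (\<Sum>i\<in>UNIV. y1 $ i) / S"
  define p1 where "p1 = (1 / (\<Sum>i\<in>UNIV. y1 $ i)) *\<^sub>R y1"
  define p2 where "p2 = (1 / (\<Sum>i\<in>UNIV. y2 $ i)) *\<^sub>R y2"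
  have p1: "p1 \<in> Omega" unfolding p1_def by (rule in_Omega[OF n1 S1])
  have p2: "p2 \<in> Omega" unfolding p2_def by (rule in_Omega[OF n2 S2])
  note pc' = pc[folded S_def, folded \<mu>_def, folded p1_def p2_def]
  have "\<psi> (\<mu> *\<^sub>R p1 + (1 - \<mu>) *\<^sub>R p2) \<le> \<mu> * \<psi> p1 + (1 - \<mu>) * \<psi> p2"
    using cv p1 p2 pc'(3,4) unfolding convex_on_def by auto
  then have "S * \<psi> (\<mu> *\<^sub>R p1 + (1 - \<mu>) *\<^sub>R p2) \<le> S * (\<mu> * \<psi> p1 + (1 - \<mu>) * \<psi> p2)"
    using pc'(1) by (simp add: mult_left_mono)
  also have "\<dots> = (S * \<mu>) * \<psi> p1 + (S * (1 - \<mu>)) * \<psi> p2" by (simp add: algebra_simps)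
  finally show ?thesis unfolding phi_def using pc'
    by (simp add: p1_def p2_def)
qed

lemma persp_strict:
  fixes y1 y2 :: "real ^ 'n::finite"
  assumes cv: "strictly_convex_on Omega \<psi>"
    and n1: "\<And>i. y1 $ i \<ge> 0" and n2: "\<And>i. y2 $ i \<ge> 0"
    and S1: "(\<Sum>i\<in>UNIV. y1 $ i) > 0" and S2: "(\<Sum>i\<in>UNIV. y2 $ i) > 0"
    and l: "0 < l" "l < 1"
    and ne: "(1 / (\<Sum>i\<in>UNIV. y1 $ i)) *\<^sub>R y1 \<noteq> (1 / (\<Sum>i\<in>UNIV. y2 $ i)) *\<^sub>R y2"
  shows "phi \<psi> ((1 - l) *\<^sub>R y1 + l *\<^sub>R y2) < (1 - l) * phi \<psi> y1 + l * phi \<psi> y2"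
proof -
  have l': "0 \<le> l" "l \<le> 1" using l by auto
  note pc = persp_comb[OF S1 S2 l']
  define S where "S \<equiv> (1 - l) * (\<Sum>i\<in>UNIV. y1 $ i) + l * (\<Sum>i\<in>UNIV. y2 $ i)"
  define \<mu> where "\<mu> \<equiv> (1 - l) * (\<Sum>i\<in>UNIV. y1 $ i) / S"
  define p1 where "p1 = (1 / (\<Sum>i\<in>UNIV. y1 $ i)) *\<^sub>R y1"
  define p2 where "p2 = (1 / (\<Sum>i\<in>UNIV. y2 $ i)) *\<^sub>R y2"
  have p1: "p1 \<in> Omega" unfolding p1_def by (rule in_Omega[OF n1 S1])
  have p2: "p2 \<in> Omega" unfolding p2_def by (rule in_Omega[OF n2 S2])
  note pc' = pc[folded S_def, folded \<mu>_def, folded p1_def p2_def]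
  have m: "0 < \<mu>" "\<mu> < 1" using pc'(8) l by auto
  have "\<psi> ((1 - (1 - \<mu>)) *\<^sub>R p1 + (1 - \<mu>) *\<^sub>R p2) < (1 - (1 - \<mu>)) * \<psi> p1 + (1 - \<mu>) * \<psi> p2"
    using cv p1 p2 m ne unfolding strictly_convex_on_def p1_def[symmetric] p2_def[symmetric]
    by (metis diff_gt_0_iff_gt diff_less_eq less_add_same_cancel1)
  then have "\<psi> (\<mu> *\<^sub>R p1 + (1 - \<mu>) *\<^sub>R p2) < \<mu> * \<psi> p1 + (1 - \<mu>) * \<psi> p2" by simp
  then have "S * \<psi> (\<mu> *\<^sub>R p1 + (1 - \<mu>) *\<^sub>R p2) < S * (\<mu> * \<psi> p1 + (1 - \<mu>) * \<psi> p2)"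
    using pc'(1) by simp
  also have "\<dots> = (S * \<mu>) * \<psi> p1 + (S * (1 - \<mu>)) * \<psi> p2" by (simp add: algebra_simps)
  finally show ?thesis unfolding phi_def using pc'
    by (simp add: p1_def p2_def)
qed

definition upd :: "real ^ 'n::finite \<Rightarrow> 'n \<Rightarrow> real \<Rightarrow> real ^ 'n" where
  "upd x i s = (\<chi> j. if j = i then s else x $ j)"

lemma other_idx:
  assumes "CARD('n::finite) \<ge> 2" shows "\<exists>k::'n. k \<noteq> i"
proof (rule ccontr)
  assume "\<not> ?thesis"
  then have "(UNIV::'n set) = {i}" by auto
  then have "CARD('n) = 1" by (metis card.empty card.insert empty_iff finite.intros(1) One_nat_def)
  then show False using assms by simp
qed

lemma upd_sum_pos:
  fixes x :: "real ^ 'n::finite"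
  assumes n2: "CARD('n) \<ge> 2" and pos: "\<And>j. 0 < x $ j" and s: "0 \<le> s"
  shows "(\<Sum>j\<in>UNIV. upd x i s $ j) > 0" "\<And>j. upd x i s $ j \<ge> 0"
proof -
  show nn: "\<And>j. upd x i s $ j \<ge> 0" using pos s by (simp add: upd_def less_imp_le)
  obtain k where k: "k \<noteq> i" using other_idx[OF n2] by blast
  have "upd x i s $ k \<le> (\<Sum>j\<in>UNIV. upd x i s $ j)"
    by (rule member_le_sum) (auto simp: nn)
  moreover have "upd x i s $ k > 0" using k pos by (simp add: upd_def)
  ultimately show "(\<Sum>j\<in>UNIV. upd x i s $ j) > 0" by linarith
qed

lemma upd_sum: "(\<Sum>j\<in>UNIV. upd x i s $ j) = (\<Sum>j\<in>UNIV. upd x i 0 $ j) + s"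
proof -
  have "(\<Sum>j\<in>UNIV. upd x i s $ j) = upd x i s $ i + (\<Sum>j\<in>UNIV-{i}. upd x i s $ j)"
    by (simp add: sum.remove)
  moreover have "(\<Sum>j\<in>UNIV. upd x i 0 $ j) = upd x i 0 $ i + (\<Sum>j\<in>UNIV-{i}. upd x i 0 $ j)"
    by (simp add: sum.remove)
  moreover have "(\<Sum>j\<in>UNIV-{i}. upd x i s $ j) = (\<Sum>j\<in>UNIV-{i}. upd x i 0 $ j)"
    by (rule sum.cong) (auto simp: upd_def)
  ultimately show ?thesis by (simp add: upd_def)
qed

lemma upd_comb: "upd x i ((1 - l) * s1 + l * s2) = (1 - l) *\<^sub>R upd x i s1 + l *\<^sub>R upd x i s2"
  by (simp add: upd_def vec_eq_iff algebra_simps)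

lemma B2_step:
  fixes x :: "real ^ 'n::finite"
  assumes psi: "\<psi> \<in> Psi" and n2: "CARD('n) \<ge> 2" and pos: "\<And>j. 0 < x $ j" and s: "0 < s"
  shows "phi \<psi> (upd x i 0) \<le> phi \<psi> (upd x i s)"
proof -
  define S0 where "S0 = (\<Sum>j\<in>UNIV. upd x i 0 $ j)"
  define S where "S = (\<Sum>j\<in>UNIV. upd x i s $ j)"
  have S0: "S0 > 0" unfolding S0_def by (rule upd_sum_pos(1)[OF n2 pos]) simp
  have SS: "S = S0 + s" unfolding S_def S0_def by (rule upd_sum)
  have Sp: "S > 0" using S0 s SS by simp
  define t where "t = (1 / S) *\<^sub>R upd x i s"
  have tO: "t \<in> Omega" unfolding t_def S_def
    by (rule in_Omega; rule upd_sum_pos[OF n2 pos]) (use s in simp)+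
  have ti: "t $ i = s / S" by (simp add: t_def upd_def)
  have "\<forall>j. t $ j < 1"
  proof
    fix j
    show "t $ j < 1"
    proof (cases "j = i")
      case True
      have "s / S < 1" using S0 s SS Sp by simp
      then show ?thesis using True ti by simp
    next
      case False
      have "upd x i s $ j + s = upd x i s $ j + upd x i s $ i" by (simp add: upd_def)
      also have "\<dots> = (\<Sum>k\<in>{i,j}. upd x i s $ k)" using False by simp
      also have "\<dots> \<le> S" unfolding S_def
        by (rule sum_mono2) (auto intro: upd_sum_pos(2)[OF n2 pos] simp: less_imp_le s)
      finally have "upd x i s $ j < S" using s by linarith
      then show ?thesis using Sp by (simp add: t_def)
    qed
  qed
  then have tc: "t \<in> Omega_circ" using tO by (simp add: Omega_circ_def)
  have "\<psi> t \<ge> (1 - t $ i) * \<psi> (\<chi> j. if j = i then 0 else t $ j / (1 - t $ i))"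
    using psi tc by (simp add: Psi_def)
  moreover have e: "1 - t $ i = S0 / S" using ti SS Sp by (simp add: field_simps)
  moreover have "(\<chi> j. if j = i then 0 else t $ j / (1 - t $ i)) = (1 / S0) *\<^sub>R upd x i 0"
    unfolding e using Sp S0 by (simp add: vec_eq_iff t_def upd_def)
  ultimately have "\<psi> t \<ge> (S0 / S) * \<psi> ((1 / S0) *\<^sub>R upd x i 0)" by simp
  then have "S * \<psi> t \<ge> S * ((S0 / S) * \<psi> ((1 / S0) *\<^sub>R upd x i 0))"
    using Sp by (intro mult_left_mono) auto
  then have "S * \<psi> t \<ge> S0 * \<psi> ((1 / S0) *\<^sub>R upd x i 0)" using Sp by simp
  then show ?thesis unfolding phi_def S_def[symmetric] S0_def[symmetric] t_def by simp
qed

lemma mono_step: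
  fixes x :: "real ^ 'n::finite"
  assumes psi: "\<psi> \<in> Psi" and n2: "CARD('n) \<ge> 2" and pos: "\<And>j. 0 < x $ j"
    and s: "0 < s1" "s1 \<le> s2"
  shows "phi \<psi> (upd x i s1) \<le> phi \<psi> (upd x i s2)"
    "\<psi> \<in> Psi_sc \<Longrightarrow> s1 < s2 \<Longrightarrow> phi \<psi> (upd x i s1) < phi \<psi> (upd x i s2)"
proof -
  define l where "l = s1 / s2"
  have l: "0 < l" "l \<le> 1" using s by (auto simp: l_def)
  have e: "upd x i s1 = (1 - l) *\<^sub>R upd x i 0 + l *\<^sub>R upd x i s2"
    using s by (simp add: upd_comb[symmetric] l_def)
  have cv: "convex_on Omega \<psi>" using psi by (simp add: Psi_def)
  have B: "phi \<psi> (upd x i 0) \<le> phi \<psi> (upd x i s2)" using B2_step[OF psi n2 pos] s by simp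
  have s2: "0 \<le> s2" "0 \<le> (0::real)" using s by auto
  note P0 = upd_sum_pos[OF n2 pos s2(2)] and P2 = upd_sum_pos[OF n2 pos s2(1)]
  have "phi \<psi> (upd x i s1) \<le> (1 - l) * phi \<psi> (upd x i 0) + l * phi \<psi> (upd x i s2)"
    unfolding e by (rule persp_convex[OF cv P0(2) P2(2) P0(1) P2(1)]) (use l in auto)
  also have "\<dots> \<le> (1 - l) * phi \<psi> (upd x i s2) + l * phi \<psi> (upd x i s2)"
    using B l by (intro add_right_mono mult_left_mono) auto
  finally show "phi \<psi> (upd x i s1) \<le> phi \<psi> (upd x i s2)" by (simp add: algebra_simps)
  assume sc: "\<psi> \<in> Psi_sc" and lt: "s1 < s2"
  have l1: "l < 1" using lt s by (simp add: l_def)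
  have scv: "strictly_convex_on Omega \<psi>" using sc by (simp add: Psi_sc_def)
  have ne: "(1 / (\<Sum>j\<in>UNIV. upd x i 0 $ j)) *\<^sub>R upd x i 0 \<noteq> (1 / (\<Sum>j\<in>UNIV. upd x i s2 $ j)) *\<^sub>R upd x i s2"
  proof
    assume "(1 / (\<Sum>j\<in>UNIV. upd x i 0 $ j)) *\<^sub>R upd x i 0 = (1 / (\<Sum>j\<in>UNIV. upd x i s2 $ j)) *\<^sub>R upd x i s2"
    then have "((1 / (\<Sum>j\<in>UNIV. upd x i 0 $ j)) *\<^sub>R upd x i 0) $ i = ((1 / (\<Sum>j\<in>UNIV. upd x i s2 $ j)) *\<^sub>R upd x i s2) $ i"
      by simp
    then show False using P2(1)[of i] s by (simp add: upd_def)
  qed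
  have "phi \<psi> (upd x i s1) < (1 - l) * phi \<psi> (upd x i 0) + l * phi \<psi> (upd x i s2)"
    unfolding e by (rule persp_strict[OF scv P0(2) P2(2) P0(1) P2(1) l(1) l1 ne])
  also have "\<dots> \<le> (1 - l) * phi \<psi> (upd x i s2) + l * phi \<psi> (upd x i s2)"
    using B l by (intro add_right_mono mult_left_mono) auto
  finally show "phi \<psi> (upd x i s1) < phi \<psi> (upd x i s2)" by (simp add: algebra_simps)
qed

lemma main_le:
  fixes a b :: "real ^ 'n::finite"
  assumes psi: "\<psi> \<in> Psi" and n2: "CARD('n) \<ge> 2"
    and pos: "\<And>i. 0 < a $ i" and le: "\<And>i. a $ i \<le> b $ i"
  shows "phi \<psi> a \<le> phi \<psi> (\<chi> j. if j \<in> F then b $ j else a $ j)"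
proof -
  have "finite F" by simp
  then show ?thesis
  proof (induction F rule: finite_induct)
    case empty then show ?case by simp
  next
    case (insert i F)
    define x where "x = (\<chi> j. if j \<in> F then b $ j else a $ j)"
    have xp: "\<And>j. 0 < x $ j" using pos le by (simp add: x_def) (meson less_le_trans)
    have e1: "x = upd x i (a $ i)" using insert(2) by (simp add: x_def upd_def vec_eq_iff)
    have e2: "(\<chi> j. if j \<in> insert i F then b $ j else a $ j) = upd x i (b $ i)"
      by (simp add: x_def upd_def vec_eq_iff)
    have "phi \<psi> x \<le> phi \<psi> (upd x i (b $ i))"
      by (subst e1, rule mono_step(1)[OF psi n2 xp pos le])
    then show ?case using insert(3) e2 by (simp add: x_def)
  qed
qed

theorem lemma2p8:
  fixes a b :: "real ^ 'n::finite"
  assumes n2: "CARD('n) \<ge> 2"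
    and pos: "\<And>i. 0 < a $ i" and le: "\<And>i. a $ i \<le> b $ i"
  shows "(\<forall>\<psi>\<in>Psi.
           (\<Sum>i\<in>UNIV. a $ i) * \<psi> ((1 / (\<Sum>i\<in>UNIV. a $ i)) *\<^sub>R a)
             \<le> (\<Sum>i\<in>UNIV. b $ i) * \<psi> ((1 / (\<Sum>i\<in>UNIV. b $ i)) *\<^sub>R b)) \<and>
         (\<forall>\<psi>\<in>Psi_sc. (\<exists>i. a $ i < b $ i) \<longrightarrow>
           (\<Sum>i\<in>UNIV. a $ i) * \<psi> ((1 / (\<Sum>i\<in>UNIV. a $ i)) *\<^sub>R a)
             < (\<Sum>i\<in>UNIV. b $ i) * \<psi> ((1 / (\<Sum>i\<in>UNIV. b $ i)) *\<^sub>R b))"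
proof (intro conjI ballI impI)
  fix \<psi> :: "real ^ 'n \<Rightarrow> real" assume psi: "\<psi> \<in> Psi"
  have "phi \<psi> a \<le> phi \<psi> (\<chi> j. if j \<in> UNIV then b $ j else a $ j)"
    by (rule main_le[OF psi n2 pos le])
  then show "(\<Sum>i\<in>UNIV. a $ i) * \<psi> ((1 / (\<Sum>i\<in>UNIV. a $ i)) *\<^sub>R a)
             \<le> (\<Sum>i\<in>UNIV. b $ i) * \<psi> ((1 / (\<Sum>i\<in>UNIV. b $ i)) *\<^sub>R b)"
    by (simp add: phi_def)
next
  fix \<psi> :: "real ^ 'n \<Rightarrow> real" assume sc: "\<psi> \<in> Psi_sc" and ex: "\<exists>i. a $ i < b $ i"
  then obtain i where i: "a $ i < b $ i" by blast
  have psi: "\<psi> \<in> Psi" using sc by (simp add: Psi_sc_def)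
  define x where "x = (\<chi> j. if j \<in> UNIV - {i} then b $ j else a $ j)"
  have xp: "\<And>j. 0 < x $ j" using pos le by (simp add: x_def) (meson less_le_trans)
  have e1: "x = upd x i (a $ i)" by (simp add: x_def upd_def vec_eq_iff)
  have e2: "b = upd x i (b $ i)" by (simp add: x_def upd_def vec_eq_iff)
  have "phi \<psi> a \<le> phi \<psi> x" unfolding x_def by (rule main_le[OF psi n2 pos le])
  also have "phi \<psi> x < phi \<psi> b"
    by (subst e1, subst e2, rule mono_step(2)[OF psi n2 xp pos le sc i])
  finally show "(\<Sum>i\<in>UNIV. a $ i) * \<psi> ((1 / (\<Sum>i\<in>UNIV. a $ i)) *\<^sub>R a)
             < (\<Sum>i\<in>UNIV. b $ i) * \<psi> ((1 / (\<Sum>i\<in>UNIV. b $ i)) *\<^sub>R b)"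
    by (simp add: phi_def)
qed

end
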